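(* Let $G$ be a connected threshold graph of order $n\ge 4$ and size $m$ with $n-1<m<\binom{n}{2}$, with $c$ type 1 vertices, forward one position sequence $(f_1,\ldots,f_c)$ and numbers $F_p$ as in the context. Let $\Phi\in\mathbb{R}^{c\times c}$ be given by $\Phi_{ij}=f_{\min\{i,j\}}$ and let $\mathbf{1}\in\mathbb{R}^{c}$ be the all-ones vector. Then $F_p=\mathbf{1}^\intercal\Phi^p\mathbf{1}$ for every $p\in\mathbb{N}_0$.
   Context: A threshold graph is a simple graph whose vertices can be ordered $v_1,\ldots,v_n$ so that for each $2\le i\le n$, $v_i$ is either adjacent to all of $v_1,\ldots,v_{i-1}$ (then $a_i=1$) or to none of them (then $a_i=0$); by convention $a_1=1$. Vertex $v_i$ is of type 1 if $a_i=1$ and of type 0 if $a_i=0$; $c$ and $z$ are the numbers of type 1 and type 0 vertices. The backwards zero position sequence $(b_1,\ldots,b_z)$: $b_i$ is the number of type 1 vertices appearing after the $i$-th type 0 vertex in the order $v_1,\ldots,v_n$. The forward one position sequence $(f_1,\ldots,f_c)$: $f_i$ is the number of type 0 vertices appearing before the $i$-th type 1 vertex in the order $v_1,\ldots,v_n$. Define $F_0=c$ and for $p\ge1$, $F_p=\sum_{i_1,\ldots,i_p=1}^{z} b_{i_1}\min\{b_{i_1},b_{i_2}\}\cdots\min\{b_{i_{p-1}},b_{i_p}\}\,b_{i_p}$ (with $F_1=\sum_i b_i^2$); $F_p$ equals the number of lazy walks in $G$ whose type sequence is $1\,0^{s_1}\,1\cdots1\,0^{s_p}\,1$ for any fixed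 $s_1,\ldots,s_p\ge1$. *)

theory Defs
  imports Main "Jordan_Normal_Form.Matrix"
begin

definition simple_graph :: "'a set \<Rightarrow> ('a \<Rightarrow> 'a \<Rightarrow> bool) \<Rightarrow> bool" where
  "simple_graph V E \<longleftrightarrow> finite V \<and> (\<forall>x y. E x y \<longrightarrow> x \<in> V \<and> y \<in> V \<and> x \<noteq> y \<and> E y x)"

definition graph_connected :: "'a set \<Rightarrow> ('a \<Rightarrow> 'a \<Rightarrow> bool) \<Rightarrow> bool" where
  "graph_connected V E \<longleftrightarrow> (\<forall>x\<in>V. \<forall>y\<in>V. (x, y) \<in> {(u, w). E u w}\<^sup>*)"

definition graph_size :: "('a \<Rightarrow> 'a \<Rightarrow> bool) \<Rightarrow> nat" where
  "graph_size E = card {{x, y} | x y. E x y}"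

text \<open>vs = [v_1,...,v_n] (0-indexed) is a threshold ordering of the graph with
  type sequence a (a ! i = True means type 1), with the convention a_1 = 1.\<close>
definition threshold_ordering ::
  "'a set \<Rightarrow> ('a \<Rightarrow> 'a \<Rightarrow> bool) \<Rightarrow> 'a list \<Rightarrow> bool list \<Rightarrow> bool" where
  "threshold_ordering V E vs a \<longleftrightarrow>
     distinct vs \<and> set vs = V \<and> length a = length vs \<and> vs \<noteq> [] \<and> a ! 0 \<and>
     (\<forall>i < length vs. \<forall>j < i. (E (vs ! j) (vs ! i) \<longleftrightarrow> a ! i))"

definition num_c :: "bool list \<Rightarrow> nat" where
  "num_c a = length (filter id a)"

definition num_z :: "bool list \<Rightarrow> nat" where
  "num_z a = length (filter Not a)"

definition bzp :: "bool list \<Rightarrow> nat list" where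
  "bzp a = [length (filter id (drop (Suc k) a)). k \<leftarrow> [0..<length a], \<not> a ! k]"

definition fop :: "bool list \<Rightarrow> nat list" where
  "fop a = [length (filter Not (take k a)). k \<leftarrow> [0..<length a], a ! k]"

text \<open>F_0 = c; for p \<ge> 1, sum over index tuples (i_1..i_p) in {1..z}^p (here lists of length p
  with entries < z) of b_{i_1} min(b_{i_1},b_{i_2}) ... min(b_{i_(p-1)},b_{i_p}) b_{i_p}.\<close>
definition Fnum :: "bool list \<Rightarrow> nat \<Rightarrow> nat" where
  "Fnum a p = (if p = 0 then num_c a else
     (let b = bzp a in
      \<Sum>is \<in> {is. length is = p \<and> set is \<subseteq> {..<num_z a}}.
        b ! (is ! 0) * (\<Prod>k<p - 1. min (b ! (is ! k)) (b ! (is ! Suc k))) * b ! (is ! (p - 1))))"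

definition Phi_mat :: "bool list \<Rightarrow> real mat" where
  "Phi_mat a = mat (num_c a) (num_c a) (\<lambda>(i, j). real (fop a ! min i j))"

definition ones_vec :: "nat \<Rightarrow> real vec" where
  "ones_vec c = vec c (\<lambda>_. 1)"

end

theory Submission
  imports Defs
begin


lemma concat_map_if: "concat (map (\<lambda>k. if g k then [e k] else []) xs) = map e (filter g xs)"
  by (induction xs) auto

lemma card_distinct_nth: "distinct L \<Longrightarrow> card {x\<in>set L. R x} = card {t. t < length L \<and> R (L ! t)}"
proof -
  assume d: "distinct L"
  have "{x\<in>set L. R x} = set (filter R L)" by auto
  then have "card {x\<in>set L. R x} = length (filter R L)" using d distinct_card[of "filter R L"] by simp
  then show ?thesis by (simp add: length_filter_conv_card)
qed

lemma len_filter_idx: "length (filter Q a) = card {x. x < length a \<and> Q (a ! x)}"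
  by (simp add: length_filter_conv_card)

lemma comb:
  fixes a :: "bool list"
  defines "n \<equiv> length a"
  defines "Os \<equiv> filter (\<lambda>k. a ! k) [0..<n]"
  defines "Zs \<equiv> filter (\<lambda>k. \<not> a ! k) [0..<n]"
  shows "num_c a = length Os" "num_z a = length Zs"
    "\<And>i. i < length Os \<Longrightarrow> fop a ! i = card {t. t < length Zs \<and> Zs ! t < Os ! i}"
    "\<And>t. t < length Zs \<Longrightarrow> bzp a ! t = card {i. i < length Os \<and> Zs ! t < Os ! i}"
    "\<And>i j. i \<le> j \<Longrightarrow> j < length Os \<Longrightarrow> Os ! i \<le> Os ! j"
proof -
  have setOs: "set Os = {x. x < n \<and> a ! x}" unfolding Os_def by auto
  have setZs: "set Zs = {x. x < n \<and> \<not> a ! x}" unfolding Zs_def by auto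
  have dO: "distinct Os" and dZ: "distinct Zs" unfolding Os_def Zs_def by auto
  have lO: "length Os = card {x. x < n \<and> a ! x}"
    unfolding Os_def length_filter_conv_card by (intro arg_cong[where f=card]) auto
  have lZ: "length Zs = card {x. x < n \<and> \<not> a ! x}"
    unfolding Zs_def length_filter_conv_card by (intro arg_cong[where f=card]) auto
  show "num_c a = length Os" unfolding num_c_def lO len_filter_idx n_def by simp
  show "num_z a = length Zs" unfolding num_z_def lZ len_filter_idx n_def by simp
  have fopO: "fop a = map (\<lambda>k. length (filter Not (take k a))) Os"
    unfolding fop_def Os_def n_def by (simp add: concat_map_if)
  have bzpZ: "bzp a = map (\<lambda>k. length (filter id (drop (Suc k) a))) Zs"
    unfolding bzp_def Zs_def n_def by (simp add: concat_map_if)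
  show "fop a ! i = card {t. t < length Zs \<and> Zs ! t < Os ! i}" if i: "i < length Os" for i
  proof -
    have k: "Os ! i < n" using i setOs nth_mem by blast
    have "fop a ! i = length (filter Not (take (Os ! i) a))" using i fopO by simp
    also have "\<dots> = card {x. x < Os ! i \<and> \<not> a ! x}"
      unfolding len_filter_idx using k n_def by (intro arg_cong[where f=card]) auto
    also have "{x. x < Os ! i \<and> \<not> a ! x} = {x\<in>set Zs. x < Os ! i}" unfolding setZs using k by auto
    also have "card \<dots> = card {t. t < length Zs \<and> Zs ! t < Os ! i}" by (rule card_distinct_nth[OF dZ])
    finally show ?thesis .
  qed
  show "bzp a ! t = card {i. i < length Os \<and> Zs ! t < Os ! i}" if t: "t < length Zs" for t
  proof -
    let ?k = "Zs ! t"
    have k: "?k < n" using t setZs nth_mem by blast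
    have "bzp a ! t = length (filter id (drop (Suc ?k) a))" using t bzpZ by simp
    also have "\<dots> = card {i. i < n - Suc ?k \<and> a ! (Suc ?k + i)}"
      unfolding len_filter_idx using k n_def by (intro arg_cong[where f=card]) auto
    also have "\<dots> = card ((\<lambda>i. Suc ?k + i) ` {i. i < n - Suc ?k \<and> a ! (Suc ?k + i)})"
      by (rule card_image[symmetric]) (auto simp: inj_on_def)
    also have "(\<lambda>i. Suc ?k + i) ` {i. i < n - Suc ?k \<and> a ! (Suc ?k + i)} = {x\<in>set Os. ?k < x}"
    proof
      show "(\<lambda>i. Suc ?k + i) ` {i. i < n - Suc ?k \<and> a ! (Suc ?k + i)} \<subseteq> {x\<in>set Os. ?k < x}"
        unfolding setOs by auto
    next
      show "{x\<in>set Os. ?k < x} \<subseteq> (\<lambda>i. Suc ?k + i) ` {i. i < n - Suc ?k \<and> a ! (Suc ?k + i)}"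
      proof
        fix x assume x: "x \<in> {x\<in>set Os. ?k < x}"
        then have "x = Suc ?k + (x - Suc ?k)" by auto
        moreover have "x - Suc ?k \<in> {i. i < n - Suc ?k \<and> a ! (Suc ?k + i)}" using x unfolding setOs by auto
        ultimately show "x \<in> (\<lambda>i. Suc ?k + i) ` {i. i < n - Suc ?k \<and> a ! (Suc ?k + i)}" by blast
      qed
    qed
    also have "card {x\<in>set Os. ?k < x} = card {i. i < length Os \<and> ?k < Os ! i}" by (rule card_distinct_nth[OF dO])
    finally show ?thesis .
  qed
  show "Os ! i \<le> Os ! j" if "i \<le> j" "j < length Os" for i j
  proof -
    have "sorted Os" unfolding Os_def by (rule sorted_wrt_filter) simp
    then show ?thesis using that by (simp add: sorted_nth_mono)
  qed
qed



lemma card_sum_of_bool: "real (card {t. t < (z::nat) \<and> Q t}) = (\<Sum>t<z. of_bool (Q t))"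
proof (induction z)
  case 0 then show ?case by simp
next
  case (Suc z)
  have "{t. t < Suc z \<and> Q t} = (if Q z then insert z {t. t < z \<and> Q t} else {t. t < z \<and> Q t})"
    by (auto simp: less_Suc_eq)
  then show ?case using Suc by simp
qed

lemma card_sum_of_bool2: "real (card {t. t < (z::nat) \<and> A t \<and> B t}) = (\<Sum>t<z. of_bool (A t) * of_bool (B t))"
  unfolding card_sum_of_bool by (rule sum.cong) auto

fun chain :: "(nat \<Rightarrow> nat) \<Rightarrow> nat list \<Rightarrow> nat" where
  "chain b [] = 1"
| "chain b [t] = b t"
| "chain b (t # s # r) = min (b t) (b s) * chain b (s # r)"

lemma chain_prod:
  "is \<noteq> [] \<Longrightarrow> (\<Prod>k<length is - 1. min (b (is ! k)) (b (is ! Suc k))) * b (is ! (length is - 1)) = chain b is"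
proof (induction b "is" rule: chain.induct)
  case (3 b t s r)
  have "(\<Prod>k<length (t # s # r) - 1. min (b ((t # s # r) ! k)) (b ((t # s # r) ! Suc k)))
     = min (b t) (b s) * (\<Prod>k<length (s # r) - 1. min (b ((s # r) ! k)) (b ((s # r) ! Suc k)))"
  proof -
    have "length (t#s#r) - 1 = Suc (length r)" "length (s#r) - 1 = length r" by simp_all
    then show ?thesis by (simp only: prod.lessThan_Suc_shift) simp
  qed
  then show ?case using 3 by simp
qed auto

definition LL :: "nat \<Rightarrow> nat \<Rightarrow> nat list set" where
  "LL z p = {xs. set xs \<subseteq> {..<z} \<and> length xs = p}"

lemma LL_Suc: "LL z (Suc p) = (\<lambda>(xs, n). n#xs) ` (LL z p \<times> {..<z})"
  unfolding LL_def by (rule lists_length_Suc_eq)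

lemma LL_fin: "finite (LL z p)"
  unfolding LL_def by (rule finite_lists_length_eq) simp

lemma inj_cons: "inj_on (\<lambda>(xs, n). n#xs) X"
  by (auto simp: inj_on_def)

lemma sum_LL_Suc: "(\<Sum>r\<in>LL z (Suc p). g r) = (\<Sum>s<z. \<Sum>r\<in>LL z p. g (s # r))"
proof -
  have "(\<Sum>r\<in>LL z (Suc p). g r) = (\<Sum>x\<in>LL z p \<times> {..<z}. g ((\<lambda>(xs, n). n#xs) x))"
    unfolding LL_Suc by (subst sum.reindex) (auto simp: inj_cons)
  also have "\<dots> = (\<Sum>r\<in>LL z p. \<Sum>s<z. g (s # r))"
    apply (subst sum.cartesian_product) apply (rule sum.cong) by auto
  also have "\<dots> = (\<Sum>s<z. \<Sum>r\<in>LL z p. g (s # r))"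
    by (rule sum.swap)
  finally show ?thesis .
qed

definition G :: "(nat \<Rightarrow> nat) \<Rightarrow> nat \<Rightarrow> nat \<Rightarrow> nat \<Rightarrow> real" where
  "G b z p t = (\<Sum>r\<in>LL z p. real (chain b (t # r)))"

lemma G_0: "G b z 0 t = real (b t)"
proof -
  have "LL z 0 = {[]}" by (auto simp: LL_def)
  then show ?thesis by (simp add: G_def)
qed

lemma G_Suc: "G b z (Suc p) t = (\<Sum>s<z. real (min (b t) (b s)) * G b z p s)"
  unfolding G_def sum_LL_Suc by (simp add: sum_distrib_left)

lemma Fnum_Suc: "real (Fnum a (Suc p)) = (\<Sum>t<num_z a. real (bzp a ! t) * G (\<lambda>t. bzp a ! t) (num_z a) p t)"
proof -
  let ?b = "\<lambda>t. bzp a ! t" and ?z = "num_z a"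
  have "Fnum a (Suc p) = (\<Sum>is\<in>LL ?z (Suc p). ?b (is ! 0) * chain ?b is)"
    unfolding Fnum_def LL_def Let_def
    apply (simp add: conj_commute)
    apply (rule sum.cong, simp)
    apply (subst chain_prod[symmetric], force)
    by (simp add: mult.assoc)
  also have "\<dots> = (\<Sum>s<?z. \<Sum>r\<in>LL ?z p. ?b s * chain ?b (s # r))"
    by (simp add: sum_LL_Suc)
  finally show ?thesis by (simp add: G_def sum_distrib_left)
qed

lemma pow_mat_Suc2: "A \<in> carrier_mat n n \<Longrightarrow> A ^\<^sub>m Suc k = A * A ^\<^sub>m k"
proof (induction k)
  case 0 then show ?case by simp
next
  case (Suc k)
  have "A ^\<^sub>m Suc (Suc k) = (A * A ^\<^sub>m k) * A" using Suc by simp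
  also have "\<dots> = A * (A ^\<^sub>m k * A)" using Suc.prems by (simp add: assoc_mult_mat[of A n n "A ^\<^sub>m k" n A n])
  finally show ?case by simp
qed

lemma ones_dot: "v \<in> carrier_vec c \<Longrightarrow> ones_vec c \<bullet> v = (\<Sum>i<c. v $ i)"
  by (simp add: ones_vec_def scalar_prod_def atLeast0LessThan)

lemma matrix_part:
  fixes P :: "nat \<Rightarrow> nat \<Rightarrow> bool" and b :: "nat \<Rightarrow> nat" and Phi :: "real mat"
  assumes Phi: "Phi = mat c c (\<lambda>(i,j). real (card {t. t < z \<and> P t i \<and> P t j}))"
    and bdef: "\<And>t. t < z \<Longrightarrow> b t = card {i. i < c \<and> P t i}"
    and m: "\<And>s t. s < z \<Longrightarrow> t < z \<Longrightarrow> min (b s) (b t) = card {i. i < c \<and> P s i \<and> P t i}"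
  shows "ones_vec c \<bullet> ((Phi ^\<^sub>m Suc p) *\<^sub>v ones_vec c) = (\<Sum>t<z. real (b t) * G b z p t)"
proof -
  have Pc: "Phi \<in> carrier_mat c c" using Phi by simp
  have oc: "ones_vec c \<in> carrier_vec c" by (simp add: ones_vec_def)
  define w where "w k = (Phi ^\<^sub>m k) *\<^sub>v ones_vec c" for k
  have wc: "w k \<in> carrier_vec c" for k unfolding w_def by (rule mult_mat_vec_carrier[OF pow_carrier_mat[OF Pc] oc])
  define H where "H k t = (\<Sum>j<c. of_bool (P t j) * w k $ j)" for k t
  have mv: "(Phi *\<^sub>v v) $ i = (\<Sum>t<z. of_bool (P t i) * (\<Sum>j<c. of_bool (P t j) * v $ j))"
    if v: "v \<in> carrier_vec c" and i: "i < c" for v i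
  proof -
    have "(Phi *\<^sub>v v) $ i = (\<Sum>j<c. Phi $$ (i, j) * v $ j)"
      using v i Pc by (simp add: scalar_prod_def atLeast0LessThan row_def)
    also have "\<dots> = (\<Sum>j<c. (\<Sum>t<z. of_bool (P t i) * of_bool (P t j)) * v $ j)"
      apply (rule sum.cong, simp)
      subgoal for j
      proof -
        assume j: "j \<in> {..<c}"
        have "Phi $$ (i, j) = real (card {t. t < z \<and> P t i \<and> P t j})" using i j by (simp add: Phi)
        then show ?thesis by (simp only: card_sum_of_bool2)
      qed
      done
    also have "\<dots> = (\<Sum>j<c. \<Sum>t<z. of_bool (P t i) * (of_bool (P t j) * v $ j))"
      by (simp add: sum_distrib_right mult.assoc)
    also have "\<dots> = (\<Sum>t<z. of_bool (P t i) * (\<Sum>j<c. of_bool (P t j) * v $ j))"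
      by (subst sum.swap) (simp only: sum_distrib_left)
    finally show ?thesis .
  qed
  have wS: "w (Suc k) = Phi *\<^sub>v w k" for k
    unfolding w_def pow_mat_Suc2[OF Pc] by (rule assoc_mult_mat_vec[OF Pc pow_carrier_mat[OF Pc] oc])
  have HS: "H (Suc k) t = (\<Sum>s<z. real (min (b t) (b s)) * H k s)" if t: "t < z" for k t
  proof -
    have "H (Suc k) t = (\<Sum>j<c. of_bool (P t j) * (\<Sum>s<z. of_bool (P s j) * H k s))"
      unfolding H_def wS by (rule sum.cong, simp) (simp add: mv[OF wc])
    also have "\<dots> = (\<Sum>j<c. \<Sum>s<z. (of_bool (P t j) * of_bool (P s j)) * H k s)"
      by (simp only: sum_distrib_left mult.assoc)
    also have "\<dots> = (\<Sum>s<z. (\<Sum>j<c. of_bool (P t j) * of_bool (P s j)) * H k s)"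
      by (subst sum.swap) (simp only: sum_distrib_right)
    also have "\<dots> = (\<Sum>s<z. real (min (b t) (b s)) * H k s)"
      apply (rule sum.cong, simp)
      subgoal for s
      proof -
        assume s: "s \<in> {..<z}"
        have "(\<Sum>j<c. of_bool (P t j) * of_bool (P s j)) = real (card {j. j < c \<and> P t j \<and> P s j})"
          by (simp only: card_sum_of_bool2)
        also have "\<dots> = real (min (b t) (b s))" using m[of t s] t s by simp
        finally show ?thesis by simp
      qed
      done
    finally show ?thesis .
  qed
  have H0: "H 0 t = real (b t)" if "t < z" for t
  proof -
    have "w 0 = ones_vec c" unfolding w_def using Pc oc by simp
    then have "H 0 t = (\<Sum>j<c. of_bool (P t j))" by (simp add: H_def ones_vec_def)
    then show ?thesis using that by (simp add: bdef card_sum_of_bool)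
  qed
  have HG: "t < z \<Longrightarrow> H k t = G b z k t" for k t
  proof (induction k arbitrary: t)
    case 0 then show ?case by (simp add: H0 G_0)
  next
    case (Suc k)
    then show ?case by (simp add: HS G_Suc)
  qed
  have "ones_vec c \<bullet> w (Suc p) = (\<Sum>i<c. \<Sum>t<z. of_bool (P t i) * H p t)"
    unfolding wS ones_dot[OF mult_mat_vec_carrier[OF Pc wc]] by (rule sum.cong, simp) (simp add: mv[OF wc] H_def)
  also have "\<dots> = (\<Sum>t<z. (\<Sum>i<c. of_bool (P t i)) * H p t)"
    by (subst sum.swap) (simp only: sum_distrib_right)
  also have "\<dots> = (\<Sum>t<z. real (b t) * G b z p t)"
    by (rule sum.cong, simp) (simp add: bdef card_sum_of_bool HG)
  finally show ?thesis unfolding w_def .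
qed


lemma min_card_nested:
  fixes A :: "nat set"
  assumes "finite A" "finite B" "A \<subseteq> B \<or> B \<subseteq> A"
  shows "min (card A) (card B) = card (A \<inter> B)"
  using assms(3)
proof
  assume h: "A \<subseteq> B"
  then have "card A \<le> card B" using assms(2) by (rule card_mono[rotated])
  then show ?thesis using h by (simp add: Int_absorb2 min_absorb1)
next
  assume h: "B \<subseteq> A"
  then have "card B \<le> card A" using assms(1) by (rule card_mono[rotated])
  then show ?thesis using h by (simp add: Int_absorb1 min_absorb2)
qed

theorem propositionA3:
  fixes V :: "'v set" and E :: "'v \<Rightarrow> 'v \<Rightarrow> bool" and vs :: "'v list" and a :: "bool list"
  assumes "simple_graph V E"
    and "threshold_ordering V E vs a"
    and "graph_connected V E"
    and "card V \<ge> 4"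
    and "card V - 1 < graph_size E"
    and "graph_size E < card V choose 2"
  shows "\<forall>p::nat. real (Fnum a p) =
           ones_vec (num_c a) \<bullet> ((Phi_mat a ^\<^sub>m p) *\<^sub>v ones_vec (num_c a))"
proof
  fix p :: nat
  define Os where "Os = filter (\<lambda>k. a ! k) [0..<length a]"
  define Zs where "Zs = filter (\<lambda>k. \<not> a ! k) [0..<length a]"
  note cm = comb[where a=a, folded Os_def Zs_def]
  define c where "c = num_c a"
  define z where "z = num_z a"
  have c: "c = length Os" and z: "z = length Zs" using cm(1,2) c_def z_def by auto
  have Pc: "Phi_mat a \<in> carrier_mat c c" by (simp add: Phi_mat_def c_def)
  have oc: "ones_vec c \<in> carrier_vec c" by (simp add: ones_vec_def)
  show "real (Fnum a p) = ones_vec (num_c a) \<bullet> ((Phi_mat a ^\<^sub>m p) *\<^sub>v ones_vec (num_c a))"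
  proof (cases p)
    case 0
    have "Phi_mat a ^\<^sub>m 0 = 1\<^sub>m c" using Pc by simp
    then have "(Phi_mat a ^\<^sub>m p) *\<^sub>v ones_vec c = ones_vec c" using 0 oc by simp
    then show ?thesis using 0 by (simp add: Fnum_def ones_dot[OF oc] c_def[symmetric]) (simp add: ones_vec_def)
  next
    case (Suc q)
    let ?P = "\<lambda>t i. Zs ! t < Os ! i"
    let ?b = "\<lambda>t. bzp a ! t"
    have Phi: "Phi_mat a = mat c c (\<lambda>(i,j). real (card {t. t < z \<and> ?P t i \<and> ?P t j}))"
    proof (rule eq_matI)
      fix i j assume i: "i < dim_row (mat c c (\<lambda>(i,j). real (card {t. t < z \<and> ?P t i \<and> ?P t j})))"
        and j: "j < dim_col (mat c c (\<lambda>(i,j). real (card {t. t < z \<and> ?P t i \<and> ?P t j})))"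
      then have i: "i < c" and j: "j < c" by auto
      have mm: "Os ! min i j = min (Os ! i) (Os ! j)"
        using cm(5)[of i j] cm(5)[of j i] i j c by (auto simp: min_def)
      have "fop a ! min i j = card {t. t < length Zs \<and> Zs ! t < Os ! min i j}"
        using cm(3)[of "min i j"] i j c by simp
      also have "\<dots> = card {t. t < z \<and> ?P t i \<and> ?P t j}" unfolding mm z by simp
      finally show "Phi_mat a $$ (i, j) = mat c c (\<lambda>(i,j). real (card {t. t < z \<and> ?P t i \<and> ?P t j})) $$ (i, j)"
        using i j by (simp add: Phi_mat_def c_def)
    qed (auto simp: Phi_mat_def c_def)
    have bdef: "\<And>t. t < z \<Longrightarrow> ?b t = card {i. i < c \<and> ?P t i}"
      using cm(4) c z by simp
    have m: "min (?b s) (?b t) = card {i. i < c \<and> ?P s i \<and> ?P t i}" if s: "s < z" and t: "t < z" for s t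
    proof -
      have "min (?b s) (?b t) = card ({i. i < c \<and> ?P s i} \<inter> {i. i < c \<and> ?P t i})"
        unfolding bdef[OF s] bdef[OF t]
        apply (rule min_card_nested)
          apply simp
         apply simp
        apply (cases "Zs ! s \<le> Zs ! t")
         apply (rule disjI2) apply (auto)[1]
        apply (rule disjI1) apply (auto)[1]
        done
      also have "{i. i < c \<and> ?P s i} \<inter> {i. i < c \<and> ?P t i} = {i. i < c \<and> ?P s i \<and> ?P t i}" by auto
      finally show ?thesis .
    qed
    have "real (Fnum a p) = (\<Sum>t<z. real (?b t) * G ?b z q t)"
      unfolding Suc z_def by (rule Fnum_Suc)
    also have "\<dots> = ones_vec c \<bullet> ((Phi_mat a ^\<^sub>m Suc q) *\<^sub>v ones_vec c)"
      by (rule matrix_part[OF Phi bdef m, symmetric])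
    finally show ?thesis unfolding Suc c_def .
  qed
qed

end
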